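(* For a positive integer $m$, let $K(m)$ denote the least positive integer $K$ such that there exist $a_1,a_2,a_3,a_4\in\mathbb{Z}$ with $m=a_1^2+a_2^2+a_3^2+a_4^2$ and, for each $i$, either $a_i=0$ or $a_i\ge \frac{\sqrt{m}}{K}$. If $n$ is an even positive integer with $K(n)=\tilde K$, then there are infinitely many positive integers $m$ with $K(m)=\tilde K$.
   Context: $K(m)$ is well defined for every positive integer $m$ by Lagrange's four-square theorem. *)

theory Defs
  imports Complex_Main
begin

definition good_rep :: "nat \<Rightarrow> nat \<Rightarrow> bool" where
  "good_rep m K \<longleftrightarrow> (\<exists>a :: nat \<Rightarrow> int.
      int m = (\<Sum>i<4. (a i)^2) \<and>
      (\<forall>i<4. a i = 0 \<or> real_of_int (a i) \<ge> sqrt (real m) / real K))"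

definition Kfun :: "nat \<Rightarrow> nat" where
  "Kfun m = (LEAST K. K > 0 \<and> good_rep m K)"

end

theory Submission
  imports Defs
begin

lemma sq_cases:
  fixes b :: int
  shows "(odd b \<and> (\<exists>c. b^2 = 8*c+1)) \<or> (even b \<and> (\<exists>c. b^2 = 4*c))"
proof (cases "even b")
  case True
  then obtain k where "b = 2*k" by blast
  then have "b^2 = 4*(k^2)" by (simp add: power2_eq_square)
  with True show ?thesis by blast
next
  case False
  then obtain k where k: "b = 2*k+1" by (metis oddE)
  have "even (k*(k+1))" by simp
  then obtain j where j: "k*(k+1) = 2*j" by blast
  have "b^2 = 4*(k*(k+1)) + 1" using k by (simp add: power2_eq_square algebra_simps)
  also have "\<dots> = 8*j+1" using j by simp
  finally show ?thesis using False by blast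
qed

lemma sq_mod8:
  fixes b :: int
  shows "(odd b \<and> b^2 mod 8 = 1) \<or> (even b \<and> (b^2 mod 8 = 0 \<or> b^2 mod 8 = 4))"
proof -
  from sq_cases[of b] show ?thesis
  proof
    assume "odd b \<and> (\<exists>c. b^2 = 8*c+1)" then show ?thesis by auto
  next
    assume h: "even b \<and> (\<exists>c. b^2 = 4*c)"
    then obtain c where c: "b^2 = 4*c" by blast
    have "(4*c) mod 8 = 0 \<or> (4*c) mod 8 = 4" by presburger
    with h c show ?thesis by auto
  qed
qed

lemma res_comb:
  fixes r0 r1 r2 r3 :: int
  assumes "r0 \<in> {0,1,4}" "r1 \<in> {0,1,4}" "r2 \<in> {0,1,4}" "r3 \<in> {0,1,4}"
    "(r0+r1+r2+r3) mod 8 = 0"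
  shows "r0 \<noteq> 1 \<and> r1 \<noteq> 1 \<and> r2 \<noteq> 1 \<and> r3 \<noteq> 1"
  using assms by auto

lemma all_even:
  fixes b0 b1 b2 b3 t :: int
  assumes "8*t = b0^2 + b1^2 + b2^2 + b3^2"
  shows "even b0 \<and> even b1 \<and> even b2 \<and> even b3"
proof -
  have m: "(b0^2 mod 8 + b1^2 mod 8 + b2^2 mod 8 + b3^2 mod 8) mod 8 = 0"
  proof -
    have "(b0^2 + b1^2 + b2^2 + b3^2) mod 8 = 0" using assms[symmetric] by simp
    then show ?thesis by (metis mod_add_left_eq mod_add_right_eq add.assoc)
  qed
  have h: "\<And>b::int. b^2 mod 8 \<in> {0,1,4} \<and> (odd b \<longleftrightarrow> b^2 mod 8 = 1)"
    using sq_mod8 by fastforce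
  have "b0^2 mod 8 \<noteq> 1 \<and> b1^2 mod 8 \<noteq> 1 \<and> b2^2 mod 8 \<noteq> 1 \<and> b3^2 mod 8 \<noteq> 1"
    by (rule res_comb[OF conjunct1[OF h] conjunct1[OF h] conjunct1[OF h] conjunct1[OF h] m])
  then show ?thesis using h by blast
qed

lemma sum4: "(\<Sum>i<(4::nat). f i) = f 0 + f 1 + f 2 + (f 3 :: int)"
  by (simp add: eval_nat_numeral)

lemma good_up:
  assumes "good_rep n K"
  shows "good_rep (4*n) K"
proof -
  obtain a where a: "int n = (\<Sum>i<(4::nat). (a i)^2)"
    "\<forall>i<4. a i = 0 \<or> real_of_int (a i) \<ge> sqrt (real n) / real K"
    using assms unfolding good_rep_def by blast
  have s: "sqrt (real (4*n)) = 2 * sqrt (real n)"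
    by (simp add: real_sqrt_mult)
  have r1: "int (4*n) = (\<Sum>i<4. (2 * a i)^2)"
    using a(1) by (simp add: power_mult_distrib sum_distrib_left)
  have r2: "\<forall>i<4. 2 * a i = 0 \<or> real_of_int (2 * a i) \<ge> sqrt (real (4*n)) / real K"
  proof (intro allI impI)
    fix i :: nat assume "i < 4"
    with a(2) have "a i = 0 \<or> real_of_int (a i) \<ge> sqrt (real n) / real K" by blast
    then show "2 * a i = 0 \<or> real_of_int (2 * a i) \<ge> sqrt (real (4*n)) / real K"
      unfolding s by (auto simp: divide_simps split: if_splits)
  qed
  show ?thesis unfolding good_rep_def
    by (rule exI[where x="\<lambda>i. 2 * a i"], rule conjI[OF r1 r2])
qed

lemma good_down:
  assumes "good_rep (4*n) K" and "even n"
  shows "good_rep n K"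
proof -
  obtain b where b: "int (4*n) = (\<Sum>i<(4::nat). (b i)^2)"
    "\<forall>i<4. b i = 0 \<or> real_of_int (b i) \<ge> sqrt (real (4*n)) / real K"
    using assms unfolding good_rep_def by blast
  obtain t where t: "n = 2*t" using assms(2) by blast
  have "8 * int t = b 0 ^2 + b 1 ^2 + b 2 ^2 + b 3 ^2"
    using b(1) t by (simp add: sum4)
  then have ev: "even (b 0) \<and> even (b 1) \<and> even (b 2) \<and> even (b 3)"
    by (rule all_even)
  have evi: "\<forall>i<4. b i = 2 * (b i div 2)"
  proof (intro allI impI)
    fix i :: nat assume "i < 4"
    then have "i = 0 \<or> i = 1 \<or> i = 2 \<or> i = 3" by auto
    with ev have "even (b i)" by auto
    then show "b i = 2 * (b i div 2)" by simp
  qed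
  define a where "a i = b i div 2" for i
  have "(\<Sum>i<4. (b i)^2) = (\<Sum>i<4. 4 * (a i)^2)"
  proof (rule sum.cong)
    fix i assume "i \<in> {..<4::nat}"
    then have "b i = 2 * a i" using evi a_def by auto
    then show "(b i)^2 = 4 * (a i)^2" by (simp add: power_mult_distrib)
  qed simp
  then have r1: "int n = (\<Sum>i<4. (a i)^2)"
    using b(1) by (simp add: sum_distrib_left[symmetric])
  have s: "sqrt (real (4*n)) = 2 * sqrt (real n)"
    by (simp add: real_sqrt_mult)
  have r2: "\<forall>i<4. a i = 0 \<or> real_of_int (a i) \<ge> sqrt (real n) / real K"
  proof (intro allI impI)
    fix i :: nat assume i: "i < 4"
    then have bi: "b i = 2 * a i" using evi a_def by auto
    from b(2) i have "b i = 0 \<or> real_of_int (b i) \<ge> sqrt (real (4*n)) / real K" by blast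
    then show "a i = 0 \<or> real_of_int (a i) \<ge> sqrt (real n) / real K"
      unfolding s bi by (auto simp: divide_simps split: if_splits)
  qed
  show ?thesis unfolding good_rep_def
    by (rule exI[where x=a], rule conjI[OF r1 r2])
qed

lemma K4:
  assumes "even n" shows "Kfun (4*n) = Kfun n"
proof -
  have "\<And>K. good_rep (4*n) K = good_rep n K"
    using good_up good_down assms by blast
  then show ?thesis unfolding Kfun_def by simp
qed

lemma K4pow: "even n \<Longrightarrow> Kfun (4^k*n) = Kfun n"
proof (induction k)
  case 0 then show ?case by simp
next
  case (Suc k)
  have "Kfun (4^Suc k * n) = Kfun (4 * (4^k*n))" by (simp add: mult.assoc)
  also have "\<dots> = Kfun (4^k*n)" using Suc.prems by (intro K4) simp
  finally show ?case using Suc by simp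
qed

theorem proposition5:
  fixes n :: nat
  assumes "n > 0" and "even n"
  shows "infinite {m :: nat. m > 0 \<and> Kfun m = Kfun n}"
proof -
  have inj: "inj (\<lambda>k::nat. 4^k*n)"
  proof (rule injI)
    fix x y :: nat assume "4^x*n = 4^y*n"
    then have "(4::nat)^x = 4^y" using assms(1) by simp
    then show "x = y" by (metis power_inject_exp one_less_numeral_iff semiring_norm(76))
  qed
  have "range (\<lambda>k::nat. 4^k*n) \<subseteq> {m :: nat. m > 0 \<and> Kfun m = Kfun n}"
  proof
    fix m assume "m \<in> range (\<lambda>k::nat. 4^k*n)"
    then obtain k where "m = 4^k*n" by blast
    then show "m \<in> {m :: nat. m > 0 \<and> Kfun m = Kfun n}"
      using assms K4pow[OF assms(2), of k] by simp
  qed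
  moreover have "infinite (range (\<lambda>k::nat. 4^k*n))"
    using inj finite_imageD infinite_UNIV_nat by blast
  ultimately show ?thesis using infinite_super by blast
qed

end
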